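(* For all integers $n,k \geq 2$ there exists a set $S \subset \mathbb{R}^2$ such that any $k$ points of $S$ are visible from a common point of $S$ through polygonal paths of length $\leq n$ in $S$, but there exist $k+1$ points of $S$ that are not visible from any common point of $S$ through polygonal paths of length $\leq n$ in $S$.
   Context: For $S \subset \mathbb{R}^2$ and $x,y \in S$, "$x$ sees $y$ through $S$ by a polygonal path of length $m$" means there exist distinct points $x_1,\ldots,x_{m-1}$ such that the polygonal path $[x,x_1]\cup[x_1,x_2]\cup\cdots\cup[x_{m-1},y]$ is contained in $S$ (for $m=1$ this means $[x,y]\subset S$). "Visible through polygonal paths of length $\leq n$" means visible by such a path of some length $m \leq n$. *)

theory Defs
  imports "HOL-Analysis.Analysis"
begin

definition sees_by_path :: "(real^2) set \<Rightarrow> nat \<Rightarrow> real^2 \<Rightarrow> real^2 \<Rightarrow> bool" where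
  "sees_by_path S m x y \<longleftrightarrow>
     (\<exists>p :: (real^2) list. length p = m + 1 \<and> p ! 0 = x \<and> p ! m = y \<and>
        distinct (take (m - 1) (drop 1 p)) \<and>
        (\<forall>i<m. closed_segment (p ! i) (p ! Suc i) \<subseteq> S))"

definition visible_le :: "(real^2) set \<Rightarrow> nat \<Rightarrow> real^2 \<Rightarrow> real^2 \<Rightarrow> bool" where
  "visible_le S n x y \<longleftrightarrow> (\<exists>m. 1 \<le> m \<and> m \<le> n \<and> sees_by_path S m x y)"

end

theory Submission
  imports Defs
begin



definition vis :: "(real^2) set \<Rightarrow> nat \<Rightarrow> real^2 \<Rightarrow> real^2 \<Rightarrow> bool" where
  "vis S m x y \<longleftrightarrow> (\<exists>m'. 1 \<le> m' \<and> m' \<le> m \<and> sees_by_path S m' x y)"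

lemma vis_seg: "closed_segment x y \<subseteq> S \<Longrightarrow> vis S 1 x y"
  unfolding vis_def sees_by_path_def
  by (rule exI[of _ 1], simp, rule exI[of _ "[x,y]"], simp)

lemma vis_mono: "vis S m x y \<Longrightarrow> m \<le> m2 \<Longrightarrow> vis S m2 x y"
  unfolding vis_def by auto

lemma sees_prepend:
  assumes "sees_by_path S m y z" "1 \<le> m" "closed_segment x y \<subseteq> S"
  shows "vis S (m+1) x z"
proof -
  obtain p where p: "length p = m + 1" "p ! 0 = y" "p ! m = z"
    "distinct (take (m - 1) (drop 1 p))" "\<forall>i<m. closed_segment (p ! i) (p ! Suc i) \<subseteq> S"
    using assms(1) unfolding sees_by_path_def by blast
  show ?thesis
  proof (cases "y \<in> set (take (m - 1) (drop 1 p))")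
    case False
    have "take m (drop 1 (x # p)) = p ! 0 # take (m-1) (drop 1 p)"
      using p(1) assms(2)
      by (metis One_nat_def Suc_diff_le diff_Suc_1 drop0 drop_Suc_Cons hd_conv_nth list.collapse
          list.size(3) take_Suc_Cons Zero_not_Suc drop_Suc add_is_0 tl_drop)
    then have d: "distinct (take (m + 1 - 1) (drop 1 (x # p)))"
      using False p by simp
    have s: "\<forall>i<m+1. closed_segment ((x#p) ! i) ((x#p) ! Suc i) \<subseteq> S"
    proof (intro allI impI)
      fix i assume "i < m+1"
      show "closed_segment ((x#p) ! i) ((x#p) ! Suc i) \<subseteq> S"
        using p assms(3) \<open>i < m+1\<close> by (cases i) auto
    qed
    have "sees_by_path S (m+1) x z"
      unfolding sees_by_path_def
      by (rule exI[of _ "x#p"]) (use p d s in auto)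
    then show ?thesis unfolding vis_def by auto
  next
    case True
    then obtain j0 where j0: "j0 < length (take (m - 1) (drop 1 p))" "take (m - 1) (drop 1 p) ! j0 = y"
      by (meson in_set_conv_nth)
    define j where "j = Suc j0"
    have jm: "1 \<le> j" "j \<le> m - 1" using j0 p(1) unfolding j_def by auto
    have pj: "p ! j = y" using j0 p(1) jm unfolding j_def by auto
    define q where "q = x # drop j p"
    have lq: "length q = (m - j + 1) + 1" using p(1) jm unfolding q_def by auto
    have q0: "q ! 0 = x" unfolding q_def by simp
    have qe: "q ! (m - j + 1) = z" unfolding q_def using p jm by auto
    have "take (m - j + 1 - 1) (drop 1 q) = drop (j-1) (take (m - 1) (drop 1 p))"
      unfolding q_def using jm by (simp add: drop_take)
    then have qd: "distinct (take (m - j + 1 - 1) (drop 1 q))"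
      using p(4) by (simp add: distinct_drop)
    have qs: "\<forall>i<m - j + 1. closed_segment (q ! i) (q ! Suc i) \<subseteq> S"
    proof (intro allI impI)
      fix i assume i: "i < m - j + 1"
      show "closed_segment (q ! i) (q ! Suc i) \<subseteq> S"
      proof (cases i)
        case 0 then show ?thesis using assms(3) pj p(1) jm unfolding q_def by simp
      next
        case (Suc i')
        have "closed_segment (p ! (j + i')) (p ! Suc (j + i')) \<subseteq> S" using p(5) i Suc jm by auto
        then show ?thesis using Suc p(1) i jm unfolding q_def by (simp add: add.commute)
      qed
    qed
    have "sees_by_path S (m - j + 1) x z"
      unfolding sees_by_path_def by (rule exI[of _ q]) (use lq q0 qe qd qs in auto)
    then show ?thesis unfolding vis_def using jm by (intro exI[of _ "m - j + 1"]) auto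
  qed
qed

lemma vis_prepend:
  assumes "vis S m y z" "closed_segment x y \<subseteq> S"
  shows "vis S (m+1) x z"
proof -
  obtain m' where "1 \<le> m'" "m' \<le> m" "sees_by_path S m' y z" using assms(1) unfolding vis_def by blast
  then show ?thesis using sees_prepend[OF _ _ assms(2)] vis_mono by fastforce
qed




lemma closed_fill:
  fixes C F :: "real set"
  assumes "closed C" "finite F" "{0..1} - F \<subseteq> C"
  shows "{0..1} \<subseteq> C"
proof
  fix t :: real assume t: "t \<in> {0..1}"
  show "t \<in> C"
  proof (rule ccontr)
    assume "t \<notin> C"
    then obtain e where e: "e > 0" "ball t e \<subseteq> - C"
      using assms(1) open_Compl[OF assms(1)] by (metis Compl_iff open_contains_ball)
    define a where "a = max 0 (t - e/2)"
    define b where "b = min 1 (t + e/2)"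
    have ab: "a < b" using t e unfolding a_def b_def by auto
    have "{a..b} \<subseteq> F"
    proof
      fix s assume s: "s \<in> {a..b}"
      have "s \<in> {0..1}" using s t unfolding a_def b_def by auto
      moreover have "s \<in> ball t e" using s e unfolding a_def b_def ball_def dist_real_def by auto
      ultimately show "s \<in> F" using e assms(3) by blast
    qed
    then show False using assms(2) ab infinite_Icc finite_subset by blast
  qed
qed

lemma on_line:
  fixes U V w :: "real^2"
  assumes "U $ 2 = al * U $ 1 + be" "V $ 2 = al * V $ 1 + be"
    "w \<in> closed_segment U V"
  shows "w $ 2 = al * w $ 1 + (be::real)"
proof -
  obtain u where "w = (1 - u) *\<^sub>R U + u *\<^sub>R V" using assms(3) by (auto simp: in_segment)
  then have w1: "w $ 1 = (1 - u) * U $ 1 + u * V $ 1" and w2: "w $ 2 = (1 - u) * U $ 2 + u * V $ 2" by auto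
  show ?thesis unfolding w1 w2 assms(1,2) by algebra
qed

lemma seg_piece:
  fixes I :: "'i set" and U V :: "'i \<Rightarrow> real^2" and al be :: "'i \<Rightarrow> real"
  assumes fin: "finite I"
    and onU: "\<forall>l\<in>I. U l $ 2 = al l * U l $ 1 + be l"
    and onV: "\<forall>l\<in>I. V l $ 2 = al l * V l $ 1 + be l"
    and inj: "inj_on (\<lambda>l. (al l, be l)) I"
    and sub: "closed_segment x y \<subseteq> (\<Union>l\<in>I. closed_segment (U l) (V l))"
  shows "\<exists>l\<in>I. closed_segment x y \<subseteq> closed_segment (U l) (V l)"
proof (cases "x = y")
  case True
  then show ?thesis using sub by auto
next
  case xy: False
  define pt where "pt t = (1 - t) *\<^sub>R x + t *\<^sub>R y" for t :: real
  define A where "A l = x $ 2 - al l * x $ 1 - be l" for l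
  define B where "B l = (y $ 2 - x $ 2) - al l * (y $ 1 - x $ 1)" for l
  have gl: "pt t \<in> closed_segment (U l) (V l) \<Longrightarrow> l \<in> I \<Longrightarrow> A l + t * B l = 0" for t l
  proof -
    assume a: "pt t \<in> closed_segment (U l) (V l)" "l \<in> I"
    have h: "pt t $ 2 = al l * pt t $ 1 + be l"
      using on_line[of "U l" "al l" "be l" "V l" "pt t"] onU onV a by blast
    have p1: "pt t $ 1 = (1-t) * x $ 1 + t * y $ 1" and p2: "pt t $ 2 = (1-t) * x $ 2 + t * y $ 2"
      by (simp_all add: pt_def)
    have "(1-t) * x $ 2 + t * y $ 2 = al l * ((1-t) * x $ 1 + t * y $ 1) + be l" using h p1 p2 by simp
    then show ?thesis unfolding A_def B_def by algebra
  qed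
  have fz: "finite {t. A l + t * B l = 0}" if "\<not> (A l = 0 \<and> B l = 0)" for l
  proof (cases "B l = 0")
    case True then show ?thesis using that by simp
  next
    case False
    then have "{t. A l + t * B l = 0} = {- A l / B l}" by (auto simp: field_simps)
    then show ?thesis by simp
  qed
  have cover: "t \<in> {0..1} \<Longrightarrow> \<exists>l\<in>I. pt t \<in> closed_segment (U l) (V l)" for t
  proof -
    assume "t \<in> {0..1}"
    then have "pt t \<in> closed_segment x y" unfolding in_segment pt_def by auto
    then show ?thesis using sub by blast
  qed
  obtain l0 where l0: "l0 \<in> I" "A l0 = 0" "B l0 = 0"
  proof (rule ccontr)
    assume "\<not> thesis"
    then have nz: "\<forall>l\<in>I. \<not> (A l = 0 \<and> B l = 0)" using that by blast
    have "{0..1::real} \<subseteq> (\<Union>l\<in>I. {t. A l + t * B l = 0})"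
    proof
      fix t :: real assume "t \<in> {0..1}"
      then obtain l where "l \<in> I" "pt t \<in> closed_segment (U l) (V l)" using cover by blast
      then show "t \<in> (\<Union>l\<in>I. {t. A l + t * B l = 0})" using gl by blast
    qed
    moreover have "finite (\<Union>l\<in>I. {t. A l + t * B l = 0})"
      using fz nz fin by simp
    ultimately have "finite {0..1::real}" by (rule finite_subset)
    then show False using infinite_Icc[of "0::real" 1] by simp
  qed
  have xl: "x $ 2 = al l0 * x $ 1 + be l0" using l0(2) unfolding A_def by simp
  have yl: "y $ 2 = al l0 * y $ 1 + be l0" using l0(2,3) unfolding A_def B_def by (simp add: algebra_simps)
  have uniq: "\<not> (A l = 0 \<and> B l = 0)" if "l \<in> I" "l \<noteq> l0" for l
  proof
    assume h: "A l = 0 \<and> B l = 0"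
    have xl2: "x $ 2 = al l * x $ 1 + be l" using h unfolding A_def by simp
    have yl2: "y $ 2 = al l * y $ 1 + be l" using h unfolding A_def B_def by (simp add: algebra_simps)
    show False
    proof (cases "al l = al l0")
      case True
      then have "be l = be l0" using xl xl2 by simp
      then show False using inj that l0(1) True unfolding inj_on_def by auto
    next
      case False
      have "(al l - al l0) * x $ 1 = be l0 - be l" using xl xl2 by (simp add: algebra_simps)
      moreover have "(al l - al l0) * y $ 1 = be l0 - be l" using yl yl2 by (simp add: algebra_simps)
      ultimately have e1: "x $ 1 = y $ 1" using False by (metis eq_iff_diff_eq_0 mult_cancel_left)
      then have e2: "x $ 2 = y $ 2" using xl yl by simp
      have "x = y" using e1 e2 by (simp add: vec_eq_iff forall_2)
      then show False using xy by simp
    qed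
  qed
  define F where "F = (\<Union>l\<in>I - {l0}. {t. A l + t * B l = 0})"
  have fF: "finite F" unfolding F_def
    by (subst finite_UN) (use fin fz uniq in auto)
  define C where "C = {t. pt t \<in> closed_segment (U l0) (V l0)}"
  have "C = pt -` closed_segment (U l0) (V l0)" unfolding C_def by auto
  moreover have "continuous (at t) pt" for t unfolding pt_def by (intro continuous_intros)
  ultimately have cC: "closed C" using continuous_closed_vimage[OF closed_segment] by metis
  have "{0..1} - F \<subseteq> C"
  proof
    fix t assume t: "t \<in> {0..1} - F"
    then obtain l where l: "l \<in> I" "pt t \<in> closed_segment (U l) (V l)" using cover by blast
    have "l = l0"
    proof (rule ccontr)
      assume "l \<noteq> l0"
      then have "t \<in> F" unfolding F_def using gl[OF l(2) l(1)] l(1) by blast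
      then show False using t by blast
    qed
    then show "t \<in> C" using l unfolding C_def by simp
  qed
  then have "{0..1} \<subseteq> C" using closed_fill cC fF by blast
  have "closed_segment x y \<subseteq> closed_segment (U l0) (V l0)"
  proof
    fix w assume "w \<in> closed_segment x y"
    then obtain u where u: "0 \<le> u" "u \<le> 1" "w = pt u" unfolding in_segment pt_def by blast
    then have "u \<in> C" using \<open>{0..1} \<subseteq> C\<close> by auto
    then show "w \<in> closed_segment (U l0) (V l0)" unfolding C_def u(3) by simp
  qed
  then show ?thesis using l0(1) by blast
qed




lemma conv_between:
  fixes u a b lo hi :: real
  assumes "0 \<le> u" "u \<le> 1" "lo \<le> a" "a \<le> hi" "lo \<le> b" "b \<le> hi"
  shows "lo \<le> (1-u)*a + u*b" "(1-u)*a + u*b \<le> hi"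
proof -
  have "(1-u)*a + u*b - lo = (1-u)*(a-lo) + u*(b-lo)" by (simp add: algebra_simps)
  moreover have "(1-u)*(a-lo) \<ge> 0" "u*(b-lo) \<ge> 0" using assms by auto
  ultimately show "lo \<le> (1-u)*a + u*b" by linarith
  have "hi - ((1-u)*a + u*b) = (1-u)*(hi-a) + u*(hi-b)" by (simp add: algebra_simps)
  moreover have "(1-u)*(hi-a) \<ge> 0" "u*(hi-b) \<ge> 0" using assms by auto
  ultimately show "(1-u)*a + u*b \<le> hi" by linarith
qed

definition cc :: "nat \<Rightarrow> nat \<Rightarrow> real" where "cc k j = real (k + (k+1)^j)"
definition ep :: "nat \<Rightarrow> real" where "ep n = 1 / (2 * real n)"
definition qq :: "nat \<Rightarrow> nat \<Rightarrow> nat \<Rightarrow> nat \<Rightarrow> real^2" where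
  "qq n k j s = vector [1 + real s, cc k j + ep n * real (s mod 2)]"
definition zz :: "nat \<Rightarrow> real^2" where "zz i = vector [0, real i]"

lemma qq1[simp]: "qq n k j s $ 1 = 1 + real s" unfolding qq_def by simp
lemma qq2[simp]: "qq n k j s $ 2 = cc k j + ep n * real (s mod 2)" unfolding qq_def by simp
lemma zz1[simp]: "zz i $ 1 = 0" unfolding zz_def by simp
lemma zz2[simp]: "zz i $ 2 = real i" unfolding zz_def by simp

lemma vec2_eq: "(v::real^2) = w \<longleftrightarrow> v $ 1 = w $ 1 \<and> v $ 2 = w $ 2"
  by (simp add: vec_eq_iff forall_2)

lemma cc_ge: "cc k j \<ge> real k + 1" unfolding cc_def by simp

lemma cc_sep: assumes "j \<noteq> j'" "k \<ge> 1" shows "\<bar>cc k j - cc k j'\<bar> \<ge> 1"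
proof -
  have "(k+1)^j \<noteq> (k+1::nat)^j'" using assms power_inject_exp[of "k+1" j j'] by simp
  then have "k + (k+1)^j \<noteq> k + (k+1::nat)^j'" by simp
  then show ?thesis unfolding cc_def by linarith
qed

lemma ep_pos: "n \<ge> 2 \<Longrightarrow> ep n > 0" unfolding ep_def by simp
lemma ep_le: "n \<ge> 2 \<Longrightarrow> ep n \<le> 1/4" unfolding ep_def by (simp add: field_simps)
lemma ep_mul: "n \<ge> 2 \<Longrightarrow> ep n * real n = 1/2" unfolding ep_def by (simp add: field_simps)

lemma E_coords:
  assumes "n \<ge> 2" "w \<in> closed_segment (qq n k j s) (qq n k j (Suc s))"
  shows "1 + real s \<le> w $ 1" "w $ 1 \<le> 2 + real s" "cc k j \<le> w $ 2" "w $ 2 \<le> cc k j + ep n"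
proof -
  obtain u where u: "0 \<le> u" "u \<le> 1" "w = (1 - u) *\<^sub>R qq n k j s + u *\<^sub>R qq n k j (Suc s)"
    using assms(2) by (auto simp: in_segment)
  have "w $ 1 = (1-u)*(1+real s) + u*(1 + real (Suc s))" using u(3) by simp
  then have w1: "w $ 1 = 1 + real s + u" by (simp add: algebra_simps)
  then show "1 + real s \<le> w $ 1" "w $ 1 \<le> 2 + real s" using u by auto
  have w2: "w $ 2 = (1-u) * (cc k j + ep n * real (s mod 2)) + u * (cc k j + ep n * real (Suc s mod 2))"
    using u(3) by simp
  have e: "ep n > 0" using ep_pos assms(1) by simp
  have m: "real (s mod 2) \<le> 1" "real (Suc s mod 2) \<le> 1" by (simp_all add: mod2_eq_if)
  have a: "cc k j \<le> cc k j + ep n * real (s mod 2)" "cc k j + ep n * real (s mod 2) \<le> cc k j + ep n"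
    using e m by (auto simp: mult_left_le)
  have b: "cc k j \<le> cc k j + ep n * real (Suc s mod 2)" "cc k j + ep n * real (Suc s mod 2) \<le> cc k j + ep n"
    using e m by (auto simp: mult_left_le)
  show "cc k j \<le> w $ 2" "w $ 2 \<le> cc k j + ep n"
    unfolding w2 using conv_between[OF u(1,2) a b] by auto
qed

lemma spoke_coords:
  assumes "w \<in> closed_segment (zz i) (qq n k j 0)"
  shows "0 \<le> w $ 1" "w $ 1 \<le> 1" "w $ 2 = (1 - w $ 1) * real i + w $ 1 * cc k j"
    "w $ 1 = 1 \<Longrightarrow> w = qq n k j 0" "w $ 1 = 0 \<Longrightarrow> w = zz i"
proof -
  obtain u where u: "0 \<le> u" "u \<le> 1" "w = (1 - u) *\<^sub>R zz i + u *\<^sub>R qq n k j 0"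
    using assms by (auto simp: in_segment)
  have w1: "w $ 1 = u" using u(3) by simp
  have w2: "w $ 2 = (1 - u) * real i + u * cc k j" using u(3) by simp
  show "0 \<le> w $ 1" "w $ 1 \<le> 1" "w $ 2 = (1 - w $ 1) * real i + w $ 1 * cc k j" using u w1 w2 by auto
  show "w $ 1 = 1 \<Longrightarrow> w = qq n k j 0" using w1 w2 by (simp add: vec2_eq)
  show "w $ 1 = 0 \<Longrightarrow> w = zz i" using w1 w2 by (simp add: vec2_eq)
qed




type_synonym idx = "(nat \<times> nat) + (nat \<times> nat)"

definition UU :: "nat \<Rightarrow> nat \<Rightarrow> idx \<Rightarrow> real^2" where
  "UU n k l = (case l of Inl (i,j) \<Rightarrow> zz i | Inr (j,s) \<Rightarrow> qq n k j s)"
definition VV :: "nat \<Rightarrow> nat \<Rightarrow> idx \<Rightarrow> real^2" where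
  "VV n k l = (case l of Inl (i,j) \<Rightarrow> qq n k j 0 | Inr (j,s) \<Rightarrow> qq n k j (Suc s))"
definition AL :: "nat \<Rightarrow> nat \<Rightarrow> idx \<Rightarrow> real" where
  "AL n k l = (case l of Inl (i,j) \<Rightarrow> cc k j - real i | Inr (j,s) \<Rightarrow> (if even s then ep n else - ep n))"
definition BE :: "nat \<Rightarrow> nat \<Rightarrow> idx \<Rightarrow> real" where
  "BE n k l = (case l of Inl (i,j) \<Rightarrow> real i
     | Inr (j,s) \<Rightarrow> (if even s then cc k j - ep n * (1 + real s) else cc k j + ep n * (2 + real s)))"
definition Idx :: "nat \<Rightarrow> nat \<Rightarrow> idx set" where
  "Idx n k = Inl ` {(i,j). i \<le> k \<and> j \<le> k \<and> i \<noteq> j} \<union> Inr ` ({..k} \<times> {..n-2})"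
definition SS :: "nat \<Rightarrow> nat \<Rightarrow> (real^2) set" where
  "SS n k = (\<Union>l\<in>Idx n k. closed_segment (UU n k l) (VV n k l))"

lemma Idx_finite: "finite (Idx n k)"
proof -
  have "{(i,j). i \<le> k \<and> j \<le> k \<and> i \<noteq> j} \<subseteq> {..k} \<times> {..k}" by auto
  then have "finite {(i,j). i \<le> k \<and> j \<le> k \<and> i \<noteq> j}" using finite_subset by blast
  then show ?thesis unfolding Idx_def by auto
qed

lemma onU: "\<forall>l\<in>Idx n k. UU n k l $ 2 = AL n k l * UU n k l $ 1 + BE n k l"
proof
  fix l assume "l \<in> Idx n k"
  show "UU n k l $ 2 = AL n k l * UU n k l $ 1 + BE n k l"
  proof (cases l)
    case (Inl p) then show ?thesis by (cases p) (simp add: UU_def AL_def BE_def)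
  next
    case (Inr p)
    obtain j s where p: "p = (j,s)" by (cases p)
    show ?thesis
    proof (cases "even s")
      case True
      then have "s mod 2 = 0" by presburger
      then show ?thesis using Inr p True by (simp add: UU_def AL_def BE_def algebra_simps)
    next
      case False
      then have "s mod 2 = 1" by presburger
      then show ?thesis using Inr p False by (simp add: UU_def AL_def BE_def algebra_simps)
    qed
  qed
qed

lemma onV: "\<forall>l\<in>Idx n k. VV n k l $ 2 = AL n k l * VV n k l $ 1 + BE n k l"
proof
  fix l assume "l \<in> Idx n k"
  show "VV n k l $ 2 = AL n k l * VV n k l $ 1 + BE n k l"
  proof (cases l)
    case (Inl p) then show ?thesis by (cases p) (simp add: VV_def AL_def BE_def)
  next
    case (Inr p)
    obtain j s where p: "p = (j,s)" by (cases p)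
    show ?thesis
    proof (cases "even s")
      case True
      then have "Suc s mod 2 = 1" by presburger
      then show ?thesis using Inr p True by (simp add: VV_def AL_def BE_def algebra_simps)
    next
      case False
      then have "Suc s mod 2 = 0" by presburger
      then show ?thesis using Inr p False by (simp add: VV_def AL_def BE_def algebra_simps)
    qed
  qed
qed

lemma inj_lines:
  assumes n2: "n \<ge> 2" and k2: "k \<ge> 2"
  shows "inj_on (\<lambda>l. (AL n k l, BE n k l)) (Idx n k)"
proof (rule inj_onI)
  fix l1 l2 assume l1: "l1 \<in> Idx n k" and l2: "l2 \<in> Idx n k"
    and eq: "(AL n k l1, BE n k l1) = (AL n k l2, BE n k l2)"
  have e0: "ep n > 0" "ep n \<le> 1/4" "ep n * real n = 1/2" using ep_pos ep_le ep_mul n2 by auto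
  have spoke_big: "cc k j - real i \<ge> 1" if "i \<le> k" for i j using cc_ge[of k j] that by simp
  show "l1 = l2"
  proof (cases l1)
    case (Inl p1)
    obtain i1 j1 where p1: "p1 = (i1,j1)" by (cases p1)
    have i1: "i1 \<le> k" using l1 Inl p1 unfolding Idx_def by auto
    show ?thesis
    proof (cases l2)
      case (Inl p2)
      obtain i2 j2 where p2: "p2 = (i2,j2)" by (cases p2)
      have "i1 = i2" using eq Inl p1 p2 \<open>l1 = Inl p1\<close> by (simp add: AL_def BE_def)
      moreover have "cc k j1 = cc k j2" using eq Inl p1 p2 \<open>l1 = Inl p1\<close> calculation by (simp add: AL_def BE_def)
      then have "j1 = j2" using cc_sep[of j1 j2 k] k2 by fastforce
      ultimately show ?thesis using Inl p1 p2 \<open>l1 = Inl p1\<close> by simp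
    next
      case (Inr p2)
      obtain j2 s2 where p2: "p2 = (j2,s2)" by (cases p2)
      have "AL n k l1 \<ge> 1" using spoke_big[OF i1] \<open>l1 = Inl p1\<close> p1 by (simp add: AL_def)
      moreover have "AL n k l2 \<le> 1/4" using Inr p2 e0 by (simp add: AL_def)
      ultimately show ?thesis using eq by simp
    qed
  next
    case (Inr p1)
    obtain j1 s1 where p1: "p1 = (j1,s1)" by (cases p1)
    have s1: "s1 \<le> n - 2" using l1 Inr p1 unfolding Idx_def by auto
    show ?thesis
    proof (cases l2)
      case (Inl p2)
      obtain i2 j2 where p2: "p2 = (i2,j2)" by (cases p2)
      have i2: "i2 \<le> k" using l2 Inl p2 unfolding Idx_def by auto
      have "AL n k l2 \<ge> 1" using spoke_big[OF i2] Inl p2 by (simp add: AL_def)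
      moreover have "AL n k l1 \<le> 1/4" using Inr p1 e0 by (simp add: AL_def)
      ultimately show ?thesis using eq by simp
    next
      case (Inr p2)
      obtain j2 s2 where p2: "p2 = (j2,s2)" by (cases p2)
      have s2: "s2 \<le> n - 2" using l2 Inr p2 unfolding Idx_def by auto
      have par: "even s1 = even s2"
        using eq \<open>l1 = Inr p1\<close> Inr p1 p2 e0 by (auto simp: AL_def split: if_splits)
      have sdiff: "ep n * \<bar>real s1 - real s2\<bar> < 1"
      proof -
        have "\<bar>real s1 - real s2\<bar> \<le> real n" using s1 s2 by linarith
        then have "ep n * \<bar>real s1 - real s2\<bar> \<le> ep n * real n" using e0 by (simp add: mult_left_mono)
        then show ?thesis using e0 by simp
      qed
      have be: "BE n k l1 = BE n k l2" using eq by simp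
      have key: "\<bar>cc k j1 - cc k j2\<bar> = ep n * \<bar>real s1 - real s2\<bar>"
      proof (cases "even s1")
        case True
        then have "cc k j1 - cc k j2 = ep n * (real s1 - real s2)"
          using be par \<open>l1 = Inr p1\<close> Inr p1 p2 by (simp add: BE_def algebra_simps)
        then show ?thesis using e0 by (simp add: abs_mult)
      next
        case False
        then have "cc k j1 - cc k j2 = ep n * (real s2 - real s1)"
          using be par \<open>l1 = Inr p1\<close> Inr p1 p2 by (simp add: BE_def algebra_simps)
        then show ?thesis using e0 by (simp add: abs_mult abs_minus_commute)
      qed
      have "j1 = j2"
      proof (rule ccontr)
        assume "j1 \<noteq> j2"
        then have "\<bar>cc k j1 - cc k j2\<bar> \<ge> 1" using cc_sep k2 by simp
        then show False using key sdiff by simp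
      qed
      then have "ep n * \<bar>real s1 - real s2\<bar> = 0" using key by simp
      then have "s1 = s2" using e0 by simp
      then show ?thesis using \<open>j1 = j2\<close> \<open>l1 = Inr p1\<close> Inr p1 p2 by simp
    qed
  qed
qed

lemma seg_in_SS:
  assumes "n \<ge> 2" "k \<ge> 2" "closed_segment x y \<subseteq> SS n k"
  shows "\<exists>l\<in>Idx n k. closed_segment x y \<subseteq> closed_segment (UU n k l) (VV n k l)"
  using seg_piece[OF Idx_finite onU onV inj_lines[OF assms(1,2)]] assms(3) unfolding SS_def by blast




definition chain :: "nat \<Rightarrow> nat \<Rightarrow> nat \<Rightarrow> (real^2) set" where
  "chain n k j = (\<Union>s\<in>{..n-2}. closed_segment (qq n k j s) (qq n k j (Suc s)))"
definition into :: "nat \<Rightarrow> nat \<Rightarrow> nat \<Rightarrow> (real^2) set" where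
  "into n k j = (\<Union>i\<in>{i. i \<le> k \<and> i \<noteq> j}. closed_segment (zz i) (qq n k j 0))"
definition phi :: "nat \<Rightarrow> nat \<Rightarrow> nat \<Rightarrow> real^2 \<Rightarrow> real" where
  "phi n k j w = (if w \<in> chain n k j then real n - w $ 1 else if w \<in> into n k j then real n else real n + 1)"

context
  fixes n k :: nat
  assumes n2: "n \<ge> 2" and k2: "k \<ge> 2"
begin

lemma chain_coords:
  assumes "w \<in> chain n k j"
  shows "1 \<le> w $ 1" "w $ 1 \<le> real n" "cc k j \<le> w $ 2" "w $ 2 \<le> cc k j + ep n"
proof -
  obtain s where s: "s \<le> n - 2" "w \<in> closed_segment (qq n k j s) (qq n k j (Suc s))"
    using assms unfolding chain_def by auto
  note E = E_coords[OF n2 s(2)]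
  show "1 \<le> w $ 1" "cc k j \<le> w $ 2" "w $ 2 \<le> cc k j + ep n" using E by auto
  have "2 + real s \<le> real n" using s(1) n2 by linarith
  then show "w $ 1 \<le> real n" using E by linarith
qed

lemma chain_disj:
  assumes "w \<in> chain n k j" "w \<in> chain n k j'" shows "j = j'"
proof (rule ccontr)
  assume "j \<noteq> j'"
  then have "\<bar>cc k j - cc k j'\<bar> \<ge> 1" using cc_sep k2 by simp
  moreover have "ep n \<le> 1/4" using ep_le n2 by simp
  ultimately show False using chain_coords[OF assms(1)] chain_coords[OF assms(2)] by linarith
qed

lemma spoke_chain:
  assumes "w \<in> closed_segment (zz i) (qq n k j' 0)" "w \<in> chain n k j"
  shows "j' = j" "w = qq n k j 0"
proof -
  note sp = spoke_coords[OF assms(1)]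
  have "w $ 1 = 1" using sp chain_coords[OF assms(2)] by linarith
  then have w: "w = qq n k j' 0" using sp by blast
  have "qq n k j' 0 \<in> chain n k j'" unfolding chain_def by (rule UN_I[of 0]) auto
  then show "j' = j" using chain_disj assms(2) w by blast
  then show "w = qq n k j 0" using w by simp
qed

lemma phi_bounds:
  shows "phi n k j w \<le> real n + 1"
    "w \<notin> chain n k j \<Longrightarrow> phi n k j w \<ge> real n"
    "w \<in> chain n k j \<Longrightarrow> phi n k j w = real n - w $ 1"
    "w \<in> chain n k j \<Longrightarrow> phi n k j w \<le> real n - 1"
  using chain_coords[of w j] unfolding phi_def by auto

lemma phi_lip:
  assumes "closed_segment x y \<subseteq> SS n k"
  shows "phi n k j x \<le> phi n k j y + 1"
proof -
  obtain l where l: "l \<in> Idx n k" "closed_segment x y \<subseteq> closed_segment (UU n k l) (VV n k l)"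
    using seg_in_SS[OF n2 k2 assms] by blast
  have xy: "x \<in> closed_segment (UU n k l) (VV n k l)" "y \<in> closed_segment (UU n k l) (VV n k l)"
    using l(2) by auto
  show ?thesis
  proof (cases l)
    case (Inr p)
    obtain j' s where p: "p = (j', s)" by (cases p)
    have s: "s \<le> n - 2" using l(1) Inr p unfolding Idx_def by auto
    have xE: "x \<in> closed_segment (qq n k j' s) (qq n k j' (Suc s))"
      and yE: "y \<in> closed_segment (qq n k j' s) (qq n k j' (Suc s))"
      using xy Inr p by (auto simp: UU_def VV_def)
    have xc: "x \<in> chain n k j'" and yc: "y \<in> chain n k j'" using xE yE s unfolding chain_def by auto
    show ?thesis
    proof (cases "j' = j")
      case True
      have "\<bar>x $ 1 - y $ 1\<bar> \<le> 1" using E_coords[OF n2 xE] E_coords[OF n2 yE] by linarith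
      moreover have "phi n k j x = real n - x $ 1" "phi n k j y = real n - y $ 1"
        using phi_bounds(3) xc yc True by blast+
      ultimately show ?thesis by linarith
    next
      case False
      then have "x \<notin> chain n k j" "y \<notin> chain n k j" using chain_disj xc yc by blast+
      then show ?thesis using phi_bounds(1)[of j x] phi_bounds(2)[of y j] by linarith
    qed
  next
    case (Inl p)
    obtain i' j' where p: "p = (i', j')" by (cases p)
    have ij: "i' \<le> k" "i' \<noteq> j'" using l(1) Inl p unfolding Idx_def by auto
    have xS: "x \<in> closed_segment (zz i') (qq n k j' 0)" and yS: "y \<in> closed_segment (zz i') (qq n k j' 0)"
      using xy Inl p by (auto simp: UU_def VV_def)
    show ?thesis
    proof (cases "j' = j")
      case True
      have xi: "x \<in> into n k j" using xS ij True unfolding into_def by auto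
      have px: "phi n k j x \<le> real n" using xi unfolding phi_def using chain_coords[of x j] by auto
      have py: "phi n k j y \<ge> real n - 1"
      proof (cases "y \<in> chain n k j")
        case True
        then have "y = qq n k j 0" using spoke_chain yS by blast
        then show ?thesis using phi_bounds(3)[OF True] by simp
      next
        case False then show ?thesis using phi_bounds(2)[of y j] by linarith
      qed
      show ?thesis using px py by linarith
    next
      case False
      then have "x \<notin> chain n k j" "y \<notin> chain n k j" using spoke_chain(1) xS yS by blast+
      then show ?thesis using phi_bounds(1)[of j x] phi_bounds(2)[of y j] by linarith
    qed
  qed
qed

lemma phi_path:
  assumes "sees_by_path (SS n k) m w y"
  shows "phi n k j w \<le> phi n k j y + real m"
proof -
  obtain p where p: "length p = m + 1" "p ! 0 = w" "p ! m = y"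
    "\<forall>i<m. closed_segment (p ! i) (p ! Suc i) \<subseteq> SS n k"
    using assms unfolding sees_by_path_def by blast
  have "i \<le> m \<Longrightarrow> phi n k j (p ! 0) \<le> phi n k j (p ! i) + real i" for i
  proof (induction i)
    case 0 then show ?case by simp
  next
    case (Suc i)
    then have "phi n k j (p ! i) \<le> phi n k j (p ! Suc i) + 1" using phi_lip p(4) by simp
    then show ?case using Suc by simp
  qed
  then show ?thesis using p by force
qed

end




context
  fixes n k :: nat
  assumes n2: "n \<ge> 2" and k2: "k \<ge> 2"
begin

lemma spoke_in: "i \<le> k \<Longrightarrow> j \<le> k \<Longrightarrow> i \<noteq> j \<Longrightarrow> closed_segment (zz i) (qq n k j 0) \<subseteq> SS n k"
proof -
  assume "i \<le> k" "j \<le> k" "i \<noteq> j"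
  then have "Inl (i,j) \<in> Idx n k" unfolding Idx_def by auto
  then have "closed_segment (UU n k (Inl (i,j))) (VV n k (Inl (i,j))) \<subseteq> SS n k"
    unfolding SS_def by (rule UN_upper)
  then show ?thesis by (simp add: UU_def VV_def)
qed

lemma E_in: "j \<le> k \<Longrightarrow> s \<le> n - 2 \<Longrightarrow> closed_segment (qq n k j s) (qq n k j (Suc s)) \<subseteq> SS n k"
proof -
  assume "j \<le> k" "s \<le> n - 2"
  then have "Inr (j,s) \<in> Idx n k" unfolding Idx_def by auto
  then have "closed_segment (UU n k (Inr (j,s))) (VV n k (Inr (j,s))) \<subseteq> SS n k"
    unfolding SS_def by (rule UN_upper)
  then show ?thesis by (simp add: UU_def VV_def)
qed

lemma three_targets:
  assumes "w \<in> into n k 0" "w \<in> into n k 1" "w \<in> into n k 2" "0 < w $ 1" "w $ 1 < 1"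
  shows False
proof -
  obtain a where a: "a \<le> k" "w \<in> closed_segment (zz a) (qq n k 0 0)" using assms(1) unfolding into_def by auto
  obtain b where b: "b \<le> k" "w \<in> closed_segment (zz b) (qq n k 1 0)" using assms(2) unfolding into_def by auto
  obtain d where d: "d \<le> k" "w \<in> closed_segment (zz d) (qq n k 2 0)" using assms(3) unfolding into_def by auto
  define t where "t = w $ 1"
  have t: "0 < t" "t < 1" using assms unfolding t_def by auto
  have ea: "w $ 2 = (1 - t) * real a + t * (real k + 1)"
    using spoke_coords(3)[OF a(2)] unfolding t_def cc_def by simp
  have eb: "w $ 2 = (1 - t) * real b + t * (2 * real k + 1)"
    using spoke_coords(3)[OF b(2)] unfolding t_def cc_def by simp
  have ed: "w $ 2 = (1 - t) * real d + t * (real k + (real k + 1)^2)"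
    using spoke_coords(3)[OF d(2)] unfolding t_def cc_def by simp
  have h1: "(1 - t) * (real a - real b) = t * real k" using ea eb by (simp add: algebra_simps)
  have h2: "(1 - t) * (real a - real d) = t * real k * (real k + 2)"
    using ea ed by (simp add: algebra_simps power2_eq_square)
  have tk: "t * real k > 0" using t k2 by simp
  then have "real a - real b > 0" using h1 t by (metis mult_pos_pos zero_less_mult_pos diff_gt_0_iff_gt)
  then have "b < a" by simp
  then have "real (b + 1) \<le> real a" by (simp only: of_nat_le_iff)
  then have ab: "real a - real b \<ge> 1" by simp
  have "(1 - t) * (real a - real d) = (real k + 2) * ((1 - t) * (real a - real b))"
    using h1 h2 by (simp add: algebra_simps)
  then have "real a - real d = (real k + 2) * (real a - real b)" using t by simp
  moreover have "(real k + 2) * (real a - real b) \<ge> real k + 2" using ab by simp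
  ultimately show False using a(1) by linarith
qed

lemma bad_point:
  assumes "w \<in> SS n k"
  shows "\<exists>j\<le>k. w \<notin> chain n k j \<and> w \<notin> into n k j"
proof (cases "\<exists>l. w \<in> chain n k l")
  case True
  then obtain l where l: "w \<in> chain n k l" by blast
  define j where "j = (if l = 0 then 1 else 0::nat)"
  have j: "j \<le> k" "j \<noteq> l" unfolding j_def using k2 by auto
  have "w \<notin> chain n k j" using chain_disj[OF n2 k2] l j by blast
  moreover have "w \<notin> into n k j"
  proof
    assume "w \<in> into n k j"
    then obtain i where "w \<in> closed_segment (zz i) (qq n k j 0)" unfolding into_def by auto
    then show False using spoke_chain(1)[OF n2 k2 _ l] j by blast
  qed
  ultimately show ?thesis using j by blast
next
  case False
  obtain l where l: "l \<in> Idx n k" "w \<in> closed_segment (UU n k l) (VV n k l)"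
    using assms unfolding SS_def by blast
  show ?thesis
  proof (cases l)
    case (Inr p)
    obtain j' s where p: "p = (j', s)" by (cases p)
    have "s \<le> n - 2" using l(1) Inr p unfolding Idx_def by auto
    then have "w \<in> chain n k j'" using l(2) Inr p unfolding chain_def by (auto simp: UU_def VV_def)
    then show ?thesis using False by blast
  next
    case (Inl p)
    obtain i0 j0 where p: "p = (i0, j0)" by (cases p)
    have ij: "i0 \<le> k" "j0 \<le> k" "i0 \<noteq> j0" using l(1) Inl p unfolding Idx_def by auto
    have wS: "w \<in> closed_segment (zz i0) (qq n k j0 0)" using l(2) Inl p by (simp add: UU_def VV_def)
    note sp = spoke_coords[OF wS]
    have nc: "\<And>j. w \<notin> chain n k j" using False by blast
    have "w $ 1 \<noteq> 1"
    proof
      assume "w $ 1 = 1"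
      then have "w = qq n k j0 0" using sp by blast
      moreover have "qq n k j0 0 \<in> chain n k j0" unfolding chain_def by (rule UN_I[of 0]) auto
      ultimately show False using nc by blast
    qed
    show ?thesis
    proof (cases "w $ 1 = 0")
      case True
      have "w \<notin> into n k i0"
      proof
        assume "w \<in> into n k i0"
        then obtain i where i: "i \<noteq> i0" "w \<in> closed_segment (zz i) (qq n k i0 0)" unfolding into_def by auto
        have "w = zz i" using spoke_coords(5)[OF i(2)] True by simp
        moreover have "w = zz i0" using sp(5) True by simp
        ultimately have "real i = real i0" using zz2 by metis
        then show False using i(1) by simp
      qed
      then show ?thesis using nc ij by blast
    next
      case False
      have "0 < w $ 1" "w $ 1 < 1" using sp(1,2) False \<open>w $ 1 \<noteq> 1\<close> by auto
      then have "\<exists>j\<in>{0,1,2::nat}. w \<notin> into n k j" using three_targets by blast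
      then obtain j where "j \<in> {0,1,2::nat}" "w \<notin> into n k j" by blast
      moreover have "j \<le> k" using calculation(1) k2 by auto
      ultimately show ?thesis using nc by blast
    qed
  qed
qed

lemma vis_into:
  assumes "i \<le> k" "j \<le> k" "i \<noteq> j" "w \<in> into n k j"
  shows "vis (SS n k) n (zz i) w"
proof -
  obtain i' where i': "i' \<le> k" "i' \<noteq> j" "w \<in> closed_segment (zz i') (qq n k j 0)"
    using assms(4) unfolding into_def by auto
  have "closed_segment (qq n k j 0) w \<subseteq> closed_segment (zz i') (qq n k j 0)"
    using i'(3) by (simp add: subset_closed_segment)
  then have "vis (SS n k) 1 (qq n k j 0) w" using spoke_in[OF i'(1) assms(2) i'(2)] vis_seg by blast
  then have "vis (SS n k) (1+1) (zz i) w" using vis_prepend spoke_in[OF assms(1-3)] by blast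
  then show ?thesis using vis_mono n2 by simp
qed

lemma vis_chain:
  assumes "i \<le> k" "j \<le> k" "i \<noteq> j" "w \<in> chain n k j"
  shows "vis (SS n k) n (zz i) w"
proof -
  obtain s where s: "s \<le> n - 2" "w \<in> closed_segment (qq n k j s) (qq n k j (Suc s))"
    using assms(4) unfolding chain_def by auto
  have "d \<le> s \<Longrightarrow> vis (SS n k) (d+1) (qq n k j (s - d)) w" for d
  proof (induction d)
    case 0
    have "closed_segment (qq n k j s) w \<subseteq> closed_segment (qq n k j s) (qq n k j (Suc s))"
      using s(2) by (simp add: subset_closed_segment)
    then show ?case using E_in[OF assms(2) s(1)] vis_seg by force
  next
    case (Suc d)
    then have ih: "vis (SS n k) (d+1) (qq n k j (s - d)) w" by simp
    have e: "Suc (s - Suc d) = s - d" using Suc.prems by simp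
    have "closed_segment (qq n k j (s - Suc d)) (qq n k j (Suc (s - Suc d))) \<subseteq> SS n k"
      using E_in[OF assms(2)] s(1) by simp
    then have "closed_segment (qq n k j (s - Suc d)) (qq n k j (s - d)) \<subseteq> SS n k" using e by simp
    then show ?case using vis_prepend[OF ih] by simp
  qed
  then have "vis (SS n k) (s+1) (qq n k j 0) w" by (metis diff_self_eq_0 order_refl)
  then have "vis (SS n k) (s+1+1) (zz i) w" using vis_prepend spoke_in[OF assms(1-3)] by blast
  moreover have "s + 1 + 1 \<le> n" using s(1) n2 by linarith
  ultimately show ?thesis using vis_mono by blast
qed

end




lemma vis_eq: "visible_le S n x y = vis S n x y"
  unfolding visible_le_def vis_def by auto

theorem theorem1p6:
  fixes n k :: nat
  assumes "n \<ge> 2" and "k \<ge> 2"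
  shows "\<exists>S :: (real^2) set.
     (\<forall>T. T \<subseteq> S \<and> finite T \<and> card T \<le> k \<longrightarrow>
          (\<exists>z\<in>S. \<forall>t\<in>T. visible_le S n z t)) \<and>
     (\<exists>T. T \<subseteq> S \<and> finite T \<and> card T = k + 1 \<and>
          \<not> (\<exists>z\<in>S. \<forall>t\<in>T. visible_le S n z t))"
proof -
  note n2 = assms(1) and k2 = assms(2)
  have P1: "\<exists>z\<in>SS n k. \<forall>t\<in>T. visible_le (SS n k) n z t"
    if T: "T \<subseteq> SS n k \<and> finite T \<and> card T \<le> k" for T
  proof -
  have cls: "\<forall>w\<in>T. \<exists>j. j \<le> k \<and> (w \<in> chain n k j \<or> w \<in> into n k j)"
  proof
    fix w assume "w \<in> T"
    then have "w \<in> SS n k" using T by blast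
    then obtain l where l: "l \<in> Idx n k" "w \<in> closed_segment (UU n k l) (VV n k l)"
      unfolding SS_def by blast
    show "\<exists>j. j \<le> k \<and> (w \<in> chain n k j \<or> w \<in> into n k j)"
    proof (cases l)
      case (Inl p)
      obtain i j where p: "p = (i,j)" by (cases p)
      have "i \<le> k" "j \<le> k" "i \<noteq> j" using l(1) Inl p unfolding Idx_def by auto
      then have "w \<in> into n k j" using l(2) Inl p unfolding into_def by (auto simp: UU_def VV_def)
      then show ?thesis using \<open>j \<le> k\<close> by blast
    next
      case (Inr p)
      obtain j s where p: "p = (j,s)" by (cases p)
      have "j \<le> k" "s \<le> n - 2" using l(1) Inr p unfolding Idx_def by auto
      then have "w \<in> chain n k j" using l(2) Inr p unfolding chain_def by (auto simp: UU_def VV_def)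
      then show ?thesis using \<open>j \<le> k\<close> by blast
    qed
  qed
  then obtain f where f: "\<forall>w\<in>T. f w \<le> k \<and> (w \<in> chain n k (f w) \<or> w \<in> into n k (f w))"
    by metis
  have "card (f ` T) \<le> k" using T card_image_le order_trans by blast
  then have "card (f ` T) < card {..k}" by simp
  then have "\<not> {..k} \<subseteq> f ` T" using card_mono[of "f ` T" "{..k}"] T by (metis finite_imageI not_le card_mono)
  then obtain i where i: "i \<le> k" "i \<notin> f ` T" by auto
  define j0 where "j0 = (if i = 0 then 1 else 0::nat)"
  have j0: "j0 \<le> k" "i \<noteq> j0" unfolding j0_def using k2 by auto
  have zS: "zz i \<in> SS n k" using spoke_in[OF n2 k2 i(1) j0(1) j0(2)] by auto
  have "\<forall>t\<in>T. visible_le (SS n k) n (zz i) t"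
  proof
    fix t assume t: "t \<in> T"
    then have ne: "i \<noteq> f t" using i by auto
    show "visible_le (SS n k) n (zz i) t"
      unfolding vis_eq using f t vis_chain[OF n2 k2 i(1) _ ne] vis_into[OF n2 k2 i(1) _ ne] by blast
  qed
  then show "\<exists>z\<in>SS n k. \<forall>t\<in>T. visible_le (SS n k) n z t" using zS by blast
  qed
  define tt where "tt j = qq n k j (n - 1)" for j
  have tin: "tt j \<in> closed_segment (qq n k j (n-2)) (qq n k j (Suc (n-2)))" for j
    unfolding tt_def using n2 by (simp add: Suc_diff_Suc numeral_2_eq_2)
  have tS: "j \<le> k \<Longrightarrow> tt j \<in> SS n k" for j using E_in[OF n2 k2, of j "n-2"] tin by auto
  have tc: "tt j \<in> chain n k j" for j unfolding chain_def using tin by blast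
  have phit: "phi n k j (tt j) = 0" for j
    using phi_bounds(3)[OF n2 k2 tc] n2 unfolding tt_def by simp
  have inj: "inj_on tt {..k}"
  proof (rule inj_onI)
    fix a b assume "tt a = tt b" "a \<in> {..k}" "b \<in> {..k}"
    then have "cc k a = cc k b" unfolding tt_def using qq2 by (metis add_right_cancel)
    then show "a = b" using cc_sep[of a b k] k2 by fastforce
  qed
  have P2: "\<exists>T. T \<subseteq> SS n k \<and> finite T \<and> card T = k + 1 \<and>
          \<not> (\<exists>z\<in>SS n k. \<forall>t\<in>T. visible_le (SS n k) n z t)"
  proof (intro exI[of _ "tt ` {..k}"] conjI)
    show "tt ` {..k} \<subseteq> SS n k" using tS by auto
    show "finite (tt ` {..k})" by simp
    show "card (tt ` {..k}) = k + 1" using card_image[OF inj] by simp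
    show "\<not> (\<exists>z\<in>SS n k. \<forall>t\<in>tt ` {..k}. visible_le (SS n k) n z t)"
    proof
      assume "\<exists>z\<in>SS n k. \<forall>t\<in>tt ` {..k}. visible_le (SS n k) n z t"
      then obtain z where z: "z \<in> SS n k" "\<forall>t\<in>tt ` {..k}. visible_le (SS n k) n z t" by blast
      obtain j where j: "j \<le> k" "z \<notin> chain n k j" "z \<notin> into n k j" using bad_point[OF n2 k2 z(1)] by blast
      have pz: "phi n k j z = real n + 1" using j unfolding phi_def by simp
      have "visible_le (SS n k) n z (tt j)" using z(2) j(1) by auto
      then obtain m where m: "m \<le> n" "sees_by_path (SS n k) m z (tt j)" unfolding visible_le_def by blast
      have "phi n k j z \<le> phi n k j (tt j) + real m" using phi_path[OF n2 k2 m(2)] by simp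
      then show False using pz phit m(1) by simp
    qed
  qed
  show ?thesis using P1 P2 by blast
qed


end
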